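(* Let $\mathfrak{g}_1,\mathfrak{g}_2$ be $S$-algebras and let $D$ be a derivation of $\mathfrak{g}_1\underline{\times}\mathfrak{g}_2$, with $D_{ij}=p_iDp_j$. If $D_{11}$ and $D_{22}$ are nilpotent derivations (of $\mathfrak{g}_1$, resp. $\mathfrak{g}_2$), then $D_{33}$ is a nilpotent endomorphism (of $\mathfrak{g}_3$).
   Context: All Lie algebras are finite-dimensional, complex, nilpotent and nonabelian. $C^1\mathfrak{g}=[\mathfrak{g},\mathfrak{g}]$. Product by generators: for $\mathfrak{g}_1,\mathfrak{g}_2$ of dimensions $m_1,m_2$ take bases $\{X_1,\dots,X_{m_1}\}$, $\{X'_1,\dots,X'_{m_2}\}$ such that $X_1,\dots,X_{n_1}$ generate $\mathfrak{g}_1$ and $X_{n_1+1},\dots,X_{m_1}$ span $C^1\mathfrak{g}_1$, and similarly for $\mathfrak{g}_2$ with $n_2$ generators. $\mathfrak{g}_1\underline{\times}\mathfrak{g}_2$ is the Lie algebra on $\mathfrak{g}_1\oplus\mathfrak{g}_2\oplus\mathfrak{g}_3$, $\mathfrak{g}_3=\langle Z_1,\dots,Z_{n_1n_2}\rangle$, with the brackets of $\mathfrak{g}_1$ and of $\mathfrak{g}_2$, $[X_i,X'_j]=Z_{(i-1)n_2+j}$ for $i\le n_1$, $j\le n_2$, $[X_i,X'_j]=0$ otherwise, and $\mathfrak{g}_3$ central. $p_i$ is the projection onto $\mathfrak{g}_i$. A nilpotent Lie algebra $\mathfrak{g}_1$ is an $S$-algebra if for every Lie algebra $\mathfrak{g}_2$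 and every derivation $D$ of $\mathfrak{g}_1\underline{\times}\mathfrak{g}_2$ one has $D_{21}(\mathfrak{g}_1)\subset C^1\mathfrak{g}_2$ (and symmetrically with the roles of the factors exchanged). *)

theory Defs
  imports Complex_Main
begin

text \<open>A Lie algebra of dimension m is given by structure constants
  c i j k (bracket of basis vectors e_i, e_j has k-th coordinate c i j k), indices 0..m-1.
  Vectors are functions nat => complex vanishing outside {0..<m}.
  Linear maps are matrices d k i (k-th output coordinate, i-th input coordinate).\<close>

type_synonym cvec = "nat \<Rightarrow> complex"
type_synonym sconst = "nat \<Rightarrow> nat \<Rightarrow> nat \<Rightarrow> complex"
type_synonym cmat = "nat \<Rightarrow> nat \<Rightarrow> complex"

definition vsp :: "nat \<Rightarrow> cvec set" where
  "vsp m = {x. \<forall>i\<ge>m. x i = 0}"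

definition vzero :: cvec where "vzero = (\<lambda>k. 0)"

definition vadd :: "cvec \<Rightarrow> cvec \<Rightarrow> cvec" where
  "vadd x y = (\<lambda>k. x k + y k)"

definition unitv :: "nat \<Rightarrow> cvec" where
  "unitv k = (\<lambda>i. if i = k then 1 else 0)"

definition cspan :: "cvec set \<Rightarrow> cvec set" where
  "cspan S = {v. \<exists>F a. finite F \<and> F \<subseteq> S \<and> v = (\<lambda>k. \<Sum>u\<in>F. a u * u k)}"

definition br :: "nat \<Rightarrow> sconst \<Rightarrow> cvec \<Rightarrow> cvec \<Rightarrow> cvec" where
  "br m c x y = (\<lambda>k. if k < m then (\<Sum>i<m. \<Sum>j<m. x i * y j * c i j k) else 0)"

text \<open>Lower central series: lcs 0 = g, lcs (k+1) = [g, lcs k]; so lcs 1 = C^1 g = [g,g].\<close>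
primrec lcs :: "nat \<Rightarrow> sconst \<Rightarrow> nat \<Rightarrow> cvec set" where
  "lcs m c 0 = vsp m"
| "lcs m c (Suc k) = cspan {br m c x y | x y. x \<in> vsp m \<and> y \<in> lcs m c k}"

definition is_lie :: "nat \<Rightarrow> sconst \<Rightarrow> bool" where
  "is_lie m c \<longleftrightarrow>
     (\<forall>x\<in>vsp m. br m c x x = vzero) \<and>
     (\<forall>x\<in>vsp m. \<forall>y\<in>vsp m. \<forall>z\<in>vsp m.
        vadd (vadd (br m c x (br m c y z)) (br m c y (br m c z x))) (br m c z (br m c x y)) = vzero)"

definition nilpotent_lie :: "nat \<Rightarrow> sconst \<Rightarrow> bool" where
  "nilpotent_lie m c \<longleftrightarrow> (\<exists>k. lcs m c k = {vzero})"

definition nonabelian :: "nat \<Rightarrow> sconst \<Rightarrow> bool" where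
  "nonabelian m c \<longleftrightarrow> (\<exists>x\<in>vsp m. \<exists>y\<in>vsp m. br m c x y \<noteq> vzero)"

text \<open>Adapted basis: e_0..e_{n-1} are the generators, e_n..e_{m-1} span C^1 g.\<close>
definition adapted :: "nat \<Rightarrow> nat \<Rightarrow> sconst \<Rightarrow> bool" where
  "adapted m n c \<longleftrightarrow> n \<le> m \<and> lcs m c 1 = cspan (unitv ` {n..<m})"

definition NLA :: "nat \<Rightarrow> nat \<Rightarrow> sconst \<Rightarrow> bool" where
  "NLA m n c \<longleftrightarrow> is_lie m c \<and> nilpotent_lie m c \<and> nonabelian m c \<and> adapted m n c"

text \<open>Product by generators g1 x g2: coordinates 0..m1-1 for g1, m1..m1+m2-1 for g2,
  m1+m2+(i*n2+j) for Z corresponding to [X_i, X'_j] (0-indexed).\<close>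
definition pdim :: "nat \<Rightarrow> nat \<Rightarrow> nat \<Rightarrow> nat \<Rightarrow> nat" where
  "pdim m1 n1 m2 n2 = m1 + m2 + n1 * n2"

definition prod_c :: "nat \<Rightarrow> nat \<Rightarrow> sconst \<Rightarrow> nat \<Rightarrow> nat \<Rightarrow> sconst \<Rightarrow> sconst" where
  "prod_c m1 n1 c1 m2 n2 c2 = (\<lambda>i j k.
     if i < m1 \<and> j < m1 \<and> k < m1 then c1 i j k
     else if m1 \<le> i \<and> i < m1 + m2 \<and> m1 \<le> j \<and> j < m1 + m2 \<and> m1 \<le> k \<and> k < m1 + m2
       then c2 (i - m1) (j - m1) (k - m1)
     else if i < n1 \<and> m1 \<le> j \<and> j < m1 + n2 \<and> k = m1 + m2 + i * n2 + (j - m1) then 1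
     else if j < n1 \<and> m1 \<le> i \<and> i < m1 + n2 \<and> k = m1 + m2 + j * n2 + (i - m1) then -1
     else 0)"

definition mapp :: "nat \<Rightarrow> nat \<Rightarrow> cmat \<Rightarrow> cvec \<Rightarrow> cvec" where
  "mapp rows cols d x = (\<lambda>k. if k < rows then (\<Sum>i<cols. d k i * x i) else 0)"

definition blk :: "cmat \<Rightarrow> nat \<Rightarrow> nat \<Rightarrow> cmat" where
  "blk d r s = (\<lambda>k i. d (r + k) (s + i))"

definition is_der :: "nat \<Rightarrow> sconst \<Rightarrow> cmat \<Rightarrow> bool" where
  "is_der m c d \<longleftrightarrow> (\<forall>x\<in>vsp m. \<forall>y\<in>vsp m.
     mapp m m d (br m c x y) = vadd (br m c (mapp m m d x) y) (br m c x (mapp m m d y)))"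

definition nilp_map :: "nat \<Rightarrow> (cvec \<Rightarrow> cvec) \<Rightarrow> bool" where
  "nilp_map m f \<longleftrightarrow> (\<exists>k. \<forall>x\<in>vsp m. (f ^^ k) x = vzero)"

text \<open>S-algebra: for every g2 and every derivation D of g1 x g2, D21(g1) \<subseteq> C^1 g2;
  and symmetrically, for every derivation D of g2 x g1, D12(g1) \<subseteq> C^1 g2.\<close>
definition S_alg :: "nat \<Rightarrow> nat \<Rightarrow> sconst \<Rightarrow> bool" where
  "S_alg m1 n1 c1 \<longleftrightarrow> (\<forall>m2 n2 c2 d. NLA m2 n2 c2 \<longrightarrow>
     (is_der (pdim m1 n1 m2 n2) (prod_c m1 n1 c1 m2 n2 c2) d \<longrightarrow>
        (\<forall>x\<in>vsp m1. mapp m2 m1 (blk d m1 0) x \<in> lcs m2 c2 1)) \<and>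
     (is_der (pdim m2 n2 m1 n1) (prod_c m2 n2 c2 m1 n1 c1) d \<longrightarrow>
        (\<forall>x\<in>vsp m1. mapp m2 m1 (blk d 0 m2) x \<in> lcs m2 c2 1)))"

end

theory Submission
  imports Defs
begin


lemma unitv_vsp: "i < m \<Longrightarrow> unitv i \<in> vsp m"
  by (simp add: unitv_def vsp_def)

lemma br_unitv_left: "p < m \<Longrightarrow> br m c (unitv p) y = (\<lambda>a. if a < m then (\<Sum>j<m. y j * c p j a) else 0)"
proof -
  assume p: "p < m"
  have "(\<Sum>i<m. \<Sum>j<m. unitv p i * y j * c i j a) = (\<Sum>j<m. y j * c p j a)" for a
  proof -
    have "(\<Sum>i<m. \<Sum>j<m. unitv p i * y j * c i j a) = (\<Sum>i<m. if i = p then (\<Sum>j<m. y j * c i j a) else 0)"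
      by (rule sum.cong) (auto simp: unitv_def)
    also have "\<dots> = (\<Sum>j<m. y j * c p j a)" using p by simp
    finally show ?thesis .
  qed
  then show ?thesis by (simp add: br_def fun_eq_iff)
qed

lemma br_unitv_right: "q < m \<Longrightarrow> br m c x (unitv q) = (\<lambda>a. if a < m then (\<Sum>i<m. x i * c i q a) else 0)"
proof -
  assume q: "q < m"
  have *: "(\<Sum>i<m. \<Sum>j<m. x i * unitv q j * c i j a) = (\<Sum>i<m. x i * c i q a)" for a
  proof (rule sum.cong[OF refl])
    fix i
    have "(\<Sum>j<m. x i * unitv q j * c i j a) = (\<Sum>j<m. if j = q then x i * c i j a else 0)"
      by (rule sum.cong) (auto simp: unitv_def)
    then show "(\<Sum>j<m. x i * unitv q j * c i j a) = x i * c i q a" using q by simp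
  qed
  show ?thesis unfolding br_def by (rule ext) (simp only: *)
qed

lemma mapp_unitv: "i < c \<Longrightarrow> mapp r c D (unitv i) = (\<lambda>k. if k < r then D k i else 0)"
  by (simp add: mapp_def unitv_def fun_eq_iff if_distrib cong: if_cong)

lemma mapp_vsp: "mapp r c D x \<in> vsp r"
  by (simp add: mapp_def vsp_def)

lemma mapp_add: "mapp r c D (vadd x y) = vadd (mapp r c D x) (mapp r c D y)"
  by (simp add: mapp_def vadd_def fun_eq_iff distrib_left sum.distrib)

lemma mapp_zero: "mapp r c D vzero = vzero"
  by (simp add: mapp_def vzero_def fun_eq_iff)

lemma mapp_lincomb: "k < r \<Longrightarrow> finite F \<Longrightarrow> mapp r c D (\<lambda>k. \<Sum>u\<in>F. a u * u k) k = (\<Sum>u\<in>F. a u * mapp r c D u k)"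
  by (simp add: mapp_def sum_distrib_left sum.swap[of _ F] mult.left_commute)

lemma c1: "i < n1 \<Longrightarrow> j < n2 \<Longrightarrow> n1 \<le> m1 \<Longrightarrow>
  prod_c m1 n1 c1 m2 n2 c2 i (m1 + j) a = (if a = m1 + m2 + i * n2 + j then 1 else 0)"
  by (simp add: prod_c_def)

lemma c2: "j < n2 \<Longrightarrow> n1 \<le> m1 \<Longrightarrow>
  prod_c m1 n1 c1 m2 n2 c2 a (m1 + j) (m1 + m2 + k) = (if a < n1 \<and> k = a * n2 + j then 1 else 0)"
  by (simp add: prod_c_def)

lemma c3: "i < n1 \<Longrightarrow> n1 \<le> m1 \<Longrightarrow>
  prod_c m1 n1 c1 m2 n2 c2 i b (m1 + m2 + k) = (if m1 \<le> b \<and> b < m1 + n2 \<and> k = i * n2 + (b - m1) then 1 else 0)"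
  by (simp add: prod_c_def)

lemma br_unitv_both: "p < m \<Longrightarrow> q < m \<Longrightarrow> br m c (unitv p) (unitv q) = (\<lambda>a. if a < m then c p q a else 0)"
proof -
  assume pq: "p < m" "q < m"
  have *: "(\<Sum>j<m. unitv q j * c p j a) = c p q a" for a
  proof -
    have "(\<Sum>j<m. unitv q j * c p j a) = (\<Sum>j<m. if j = q then c p j a else 0)"
      by (rule sum.cong) (auto simp: unitv_def)
    then show ?thesis using pq by simp
  qed
  show ?thesis using pq by (subst br_unitv_left) (auto simp: fun_eq_iff * simp del: sum.lessThan_Suc)
qed

lemma divmod_iff: "(j::nat) < n2 \<Longrightarrow> (k = i * n2 + j) = (i = k div n2 \<and> j = k mod n2)"
  by auto

lemma divmod_iff2: "(n2::nat) > 0 \<Longrightarrow> (m1 \<le> j \<and> j < m1 + n2 \<and> k = i * n2 + (j - m1)) = (j = m1 + k mod n2 \<and> i = k div n2)"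
proof
  assume "n2 > 0" "m1 \<le> j \<and> j < m1 + n2 \<and> k = i * n2 + (j - m1)"
  then show "j = m1 + k mod n2 \<and> i = k div n2" using divmod_iff[of "j - m1" n2 k i] by auto
next
  assume "n2 > 0" "j = m1 + k mod n2 \<and> i = k div n2"
  then show "m1 \<le> j \<and> j < m1 + n2 \<and> k = i * n2 + (j - m1)" by auto
qed

lemma entry:
  assumes le1: "n1 \<le> m1" and le2: "n2 \<le> m2"
    and der: "is_der (pdim m1 n1 m2 n2) (prod_c m1 n1 c1 m2 n2 c2) d"
    and k: "k < n1 * n2" and k': "k' < n1 * n2"
  shows "d (m1 + m2 + k) (m1 + m2 + k') =
    (if k mod n2 = k' mod n2 then d (k div n2) (k' div n2) else 0) +
    (if k div n2 = k' div n2 then d (m1 + k mod n2) (m1 + k' mod n2) else 0)"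
proof -
  define P where "P = pdim m1 n1 m2 n2"
  define C where "C = prod_c m1 n1 c1 m2 n2 c2"
  define i' where "i' = k' div n2"
  define j' where "j' = k' mod n2"
  have n2: "n2 > 0" using k by (cases n2) auto
  have i': "i' < n1" using k' by (simp add: i'_def less_mult_imp_div_less)
  have j': "j' < n2" using n2 by (simp add: j'_def)
  have kdiv: "k div n2 < n1" using k by (simp add: less_mult_imp_div_less)
  have kmod: "k mod n2 < n2" using n2 by simp
  have kk': "k' = i' * n2 + j'" by (simp add: i'_def j'_def)
  have P: "P = m1 + m2 + n1 * n2" by (simp add: P_def pdim_def)
  have iP: "i' < P" "m1 + j' < P" "m1 + m2 + k < P" "m1 + m2 + k' < P" using i' j' k k' le1 le2 P by auto
  have dr: "mapp P P d (br P C x y) = vadd (br P C (mapp P P d x) y) (br P C x (mapp P P d y))"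
    if "x \<in> vsp P" "y \<in> vsp P" for x y
    using der that unfolding is_der_def P_def[symmetric] C_def[symmetric] by blast
  have E0: "mapp P P d (br P C (unitv i') (unitv (m1 + j'))) (m1 + m2 + k) =
     vadd (br P C (mapp P P d (unitv i')) (unitv (m1 + j'))) (br P C (unitv i') (mapp P P d (unitv (m1 + j')))) (m1 + m2 + k)"
    using dr[OF unitv_vsp[OF iP(1)] unitv_vsp[OF iP(2)]] by (rule fun_cong)
  have E1: "br P C (unitv i') (unitv (m1 + j')) = unitv (m1 + m2 + k')"
    using iP i' j' le1 by (simp only: br_unitv_both[OF iP(1,2)]) (auto simp: C_def c1 unitv_def fun_eq_iff kk')
  have E2: "mapp P P d (unitv (m1 + m2 + k')) (m1 + m2 + k) = d (m1 + m2 + k) (m1 + m2 + k')"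
    using iP by (simp add: mapp_unitv)
  have E3: "br P C (mapp P P d (unitv i')) (unitv (m1 + j')) (m1 + m2 + k) =
      (if k mod n2 = j' then d (k div n2) i' else 0)"
  proof -
    have "br P C (mapp P P d (unitv i')) (unitv (m1 + j')) (m1 + m2 + k) =
       (\<Sum>i<P. (if i < P then d i i' else 0) * (if i < n1 \<and> k = i * n2 + j' then 1 else 0))"
      using iP j' le1 by (simp add: br_unitv_right mapp_unitv C_def c2)
    also have "\<dots> = (\<Sum>i<P. if i = k div n2 then (if k mod n2 = j' then d i i' else 0) else 0)"
      by (rule sum.cong) (auto simp: divmod_iff[OF j'] kdiv)
    also have "\<dots> = (if k mod n2 = j' then d (k div n2) i' else 0)"
      using kdiv P le1 by simp
    finally show ?thesis .
  qed
  have E4: "br P C (unitv i') (mapp P P d (unitv (m1 + j'))) (m1 + m2 + k) =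
      (if k div n2 = i' then d (m1 + k mod n2) (m1 + j') else 0)"
  proof -
    have "br P C (unitv i') (mapp P P d (unitv (m1 + j'))) (m1 + m2 + k) =
       (\<Sum>j<P. (if j < P then d j (m1 + j') else 0) * (if m1 \<le> j \<and> j < m1 + n2 \<and> k = i' * n2 + (j - m1) then 1 else 0))"
      using iP i' le1 by (simp add: br_unitv_left mapp_unitv C_def c3)
    also have "\<dots> = (\<Sum>j<P. if j = m1 + k mod n2 then (if k div n2 = i' then d j (m1 + j') else 0) else 0)"
      apply (rule sum.cong, simp)
      apply (subst divmod_iff2[OF n2])
      apply auto
      done
    also have "\<dots> = (if k div n2 = i' then d (m1 + k mod n2) (m1 + j') else 0)"
      using kmod P le2 by simp
    finally show ?thesis .
  qed
  have "d (m1 + m2 + k) (m1 + m2 + k') = (if k mod n2 = j' then d (k div n2) i' else 0) +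
      (if k div n2 = i' then d (m1 + k mod n2) (m1 + j') else 0)"
    using E0 unfolding E1 E2 vadd_def E3 E4 .
  then show ?thesis unfolding i'_def j'_def .
qed


lemma cspan_single: "v \<in> S \<Longrightarrow> v \<in> cspan S"
  unfolding cspan_def by (rule CollectI, rule exI[of _ "{v}"], rule exI[of _ "\<lambda>_. 1"]) auto

lemma cspan_unitv_low: "v \<in> cspan (unitv ` {n..<m}) \<Longrightarrow> k < n \<Longrightarrow> v k = 0"
  unfolding cspan_def by (auto simp: unitv_def intro!: sum.neutral)

lemma tri:
  assumes "NLA m n c" "is_der m c D" "k < n" "n \<le> i" "i < m"
  shows "D k i = 0"
proof -
  have ad: "n \<le> m" "lcs m c 1 = cspan (unitv ` {n..<m})" using assms(1) by (auto simp: NLA_def adapted_def)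
  have low: "v k = 0" if "v \<in> lcs m c 1" for v
    using that ad(2) cspan_unitv_low[OF _ assms(3)] by metis
  have brl: "br m c x y \<in> lcs m c 1" if "x \<in> vsp m" "y \<in> vsp m" for x y
  proof -
    have "br m c x y \<in> {br m c x y | x y. x \<in> vsp m \<and> y \<in> lcs m c 0}" using that by auto
    then show ?thesis unfolding One_nat_def lcs.simps(2) by (rule cspan_single)
  qed
  have "unitv i \<in> unitv ` {n..<m}" using assms(4,5) by auto
  then have "unitv i \<in> lcs m c 1" unfolding ad(2) by (rule cspan_single)
  then have "unitv i \<in> cspan {br m c x y | x y. x \<in> vsp m \<and> y \<in> lcs m c 0}"
    unfolding One_nat_def lcs.simps(2) .
  then obtain F a where F: "finite F" "F \<subseteq> {br m c x y | x y. x \<in> vsp m \<and> y \<in> lcs m c 0}"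
    and ui: "unitv i = (\<lambda>k. \<Sum>u\<in>F. a u * u k)"
    unfolding cspan_def by blast
  have km: "k < m" using assms ad by auto
  have "D k i = mapp m m D (unitv i) k" using km assms(5) by (simp add: mapp_unitv)
  also have "\<dots> = (\<Sum>u\<in>F. a u * mapp m m D u k)" using ui F km by (simp add: mapp_lincomb)
  also have "\<dots> = 0"
  proof (rule sum.neutral, rule ballI)
    fix u assume "u \<in> F"
    then obtain x y where xy: "x \<in> vsp m" "y \<in> vsp m" "u = br m c x y" using F(2) lcs.simps(1) by blast
    have "mapp m m D u = vadd (br m c (mapp m m D x) y) (br m c x (mapp m m D y))"
      using assms(2) xy unfolding is_der_def by auto
    moreover have "br m c (mapp m m D x) y k = 0" "br m c x (mapp m m D y) k = 0"
      using low brl xy(1,2) mapp_vsp by blast+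
    ultimately show "a u * mapp m m D u k = 0" by (simp add: vadd_def)
  qed
  finally show ?thesis .
qed



definition Lop :: "nat \<Rightarrow> nat \<Rightarrow> cmat \<Rightarrow> cvec \<Rightarrow> cvec" where
  "Lop n1 n2 A x = (\<lambda>k. if k < n1 * n2 then (\<Sum>i'<n1. A (k div n2) i' * x (i' * n2 + k mod n2)) else 0)"

definition Rop :: "nat \<Rightarrow> nat \<Rightarrow> cmat \<Rightarrow> cvec \<Rightarrow> cvec" where
  "Rop n1 n2 B x = (\<lambda>k. if k < n1 * n2 then (\<Sum>j'<n2. B (k mod n2) j' * x ((k div n2) * n2 + j')) else 0)"

lemma idx_bound: "(i::nat) < n1 \<Longrightarrow> j < n2 \<Longrightarrow> i * n2 + j < n1 * n2"
proof -
  assume "i < n1" "j < n2"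
  then have "i * n2 + j < Suc i * n2" by simp
  also have "\<dots> \<le> n1 * n2" using \<open>i < n1\<close> by (intro mult_le_mono1) simp
  finally show ?thesis .
qed

lemma sum_split: "(\<Sum>k<n1 * (n2::nat). f k) = (\<Sum>i<n1. \<Sum>j<n2. f (i * n2 + j))"
proof -
  have "(\<Sum>k<n1 * n2. f k) = (\<Sum>i<n1. sum f {i * n2..<i * n2 + n2})"
    using sum.nat_group[of f n2 n1] by simp
  also have "\<dots> = (\<Sum>i<n1. \<Sum>j<n2. f (i * n2 + j))"
  proof (rule sum.cong[OF refl])
    fix i
    have "sum f {0 + i * n2..<n2 + i * n2} = (\<Sum>j\<in>{0..<n2}. f (j + i * n2))"
      by (rule sum.shift_bounds_nat_ivl)
    then show "sum f {i * n2..<i * n2 + n2} = (\<Sum>j<n2. f (i * n2 + j))"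
      by (simp add: atLeast0LessThan add.commute)
  qed
  finally show ?thesis .
qed

lemma Lop_add: "Lop n1 n2 A (vadd x y) = vadd (Lop n1 n2 A x) (Lop n1 n2 A y)"
  by (simp add: Lop_def vadd_def fun_eq_iff distrib_left sum.distrib)
lemma Rop_add: "Rop n1 n2 A (vadd x y) = vadd (Rop n1 n2 A x) (Rop n1 n2 A y)"
  by (simp add: Rop_def vadd_def fun_eq_iff distrib_left sum.distrib)
lemma Lop_zero: "Lop n1 n2 A vzero = vzero"
  by (simp add: Lop_def vzero_def fun_eq_iff)
lemma Rop_zero: "Rop n1 n2 A vzero = vzero"
  by (simp add: Rop_def vzero_def fun_eq_iff)
lemma Lop_vsp: "Lop n1 n2 A x \<in> vsp (n1 * n2)"
  by (simp add: Lop_def vsp_def)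
lemma Rop_vsp: "Rop n1 n2 A x \<in> vsp (n1 * n2)"
  by (simp add: Rop_def vsp_def)

lemma comm_LR: "Lop n1 n2 A (Rop n1 n2 B x) = Rop n1 n2 B (Lop n1 n2 A x)"
proof (rule ext)
  fix k
  show "Lop n1 n2 A (Rop n1 n2 B x) k = Rop n1 n2 B (Lop n1 n2 A x) k"
  proof (cases "k < n1 * n2")
    case False then show ?thesis by (simp add: Lop_def Rop_def)
  next
    case True
    have n2: "n2 > 0" using True by (cases n2) auto
    have kd: "k div n2 < n1" using True by (simp add: less_mult_imp_div_less)
    have km: "k mod n2 < n2" using n2 by simp
    have "Lop n1 n2 A (Rop n1 n2 B x) k = (\<Sum>i'<n1. A (k div n2) i' * (\<Sum>j'<n2. B (k mod n2) j' * x (i' * n2 + j')))"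
      using True km by (auto simp: Lop_def Rop_def idx_bound intro!: sum.cong)
    also have "\<dots> = (\<Sum>j'<n2. B (k mod n2) j' * (\<Sum>i'<n1. A (k div n2) i' * x (i' * n2 + j')))"
      by (simp add: sum_distrib_left sum.swap[of _ "{..<n1}"] mult.left_commute)
    also have "\<dots> = Rop n1 n2 B (Lop n1 n2 A x) k"
      using True kd by (auto simp: Lop_def Rop_def idx_bound intro!: sum.cong)
    finally show ?thesis .
  qed
qed

lemma T_eq:
  assumes E: "\<And>k k'. k < n1 * n2 \<Longrightarrow> k' < n1 * n2 \<Longrightarrow> E k k' =
    (if k mod n2 = k' mod n2 then A (k div n2) (k' div n2) else 0) +
    (if k div n2 = k' div n2 then B (k mod n2) (k' mod n2) else 0)"
  shows "mapp (n1 * n2) (n1 * n2) E x = vadd (Lop n1 n2 A x) (Rop n1 n2 B x)"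
proof (rule ext)
  fix k
  show "mapp (n1 * n2) (n1 * n2) E x k = vadd (Lop n1 n2 A x) (Rop n1 n2 B x) k"
  proof (cases "k < n1 * n2")
    case False then show ?thesis by (simp add: Lop_def Rop_def mapp_def vadd_def)
  next
    case True
    have n2: "n2 > 0" using True by (cases n2) auto
    have kd: "k div n2 < n1" using True by (simp add: less_mult_imp_div_less)
    have km: "k mod n2 < n2" using n2 by simp
    have "mapp (n1 * n2) (n1 * n2) E x k = (\<Sum>i'<n1. \<Sum>j'<n2. E k (i' * n2 + j') * x (i' * n2 + j'))"
      using True by (simp add: mapp_def sum_split)
    also have "\<dots> = (\<Sum>i'<n1. \<Sum>j'<n2. (if j' = k mod n2 then A (k div n2) i' * x (i' * n2 + j') else 0)
        + (if i' = k div n2 then B (k mod n2) j' * x (i' * n2 + j') else 0))"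
      using True by (intro sum.cong refl) (auto simp: E idx_bound distrib_right)
    also have "\<dots> = (\<Sum>i'<n1. \<Sum>j'<n2. (if j' = k mod n2 then A (k div n2) i' * x (i' * n2 + j') else 0))
        + (\<Sum>i'<n1. \<Sum>j'<n2. (if i' = k div n2 then B (k mod n2) j' * x (i' * n2 + j') else 0))"
      by (simp add: sum.distrib)
    also have "\<dots> = (\<Sum>i'<n1. A (k div n2) i' * x (i' * n2 + k mod n2)) + (\<Sum>j'<n2. B (k mod n2) j' * x ((k div n2) * n2 + j'))"
    proof -
      have s1: "(\<Sum>i'<n1. \<Sum>j'<n2. (if j' = k mod n2 then A (k div n2) i' * x (i' * n2 + j') else 0))
        = (\<Sum>i'<n1. A (k div n2) i' * x (i' * n2 + k mod n2))"
        using km by simp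
      have s2: "(\<Sum>i'<n1. \<Sum>j'<n2. (if i' = k div n2 then B (k mod n2) j' * x (i' * n2 + j') else 0))
        = (\<Sum>i'<n1. if i' = k div n2 then (\<Sum>j'<n2. B (k mod n2) j' * x (i' * n2 + j')) else 0)"
        by (rule sum.cong) auto
      have s3: "(\<Sum>i'<n1. if i' = k div n2 then (\<Sum>j'<n2. B (k mod n2) j' * x (i' * n2 + j')) else 0)
         = (\<Sum>j'<n2. B (k mod n2) j' * x ((k div n2) * n2 + j'))"
        using kd by simp
      show ?thesis unfolding s1 s2 s3 ..
    qed
    also have "\<dots> = vadd (Lop n1 n2 A x) (Rop n1 n2 B x) k"
      using True by (simp add: Lop_def Rop_def vadd_def)
    finally show ?thesis .
  qed
qed

lemma funpow_add_gen:
  assumes "\<And>x y. f (vadd x y) = vadd (f x) (f y)" "f vzero = vzero"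
  shows "(f ^^ n) (vadd x y) = vadd ((f ^^ n) x) ((f ^^ n) y) \<and> (f ^^ n) vzero = vzero"
  by (induction n) (auto simp: assms)

lemma funpow_comm:
  assumes "\<And>x. L (R x) = R (L x)"
  shows "(R ^^ b) (L x) = L ((R ^^ b) x)"
  by (induction b) (auto simp: assms)

lemma comm_nilp:
  fixes L R :: "cvec \<Rightarrow> cvec"
  assumes aL: "\<And>x y. L (vadd x y) = vadd (L x) (L y)" and zL: "L vzero = vzero"
    and aR: "\<And>x y. R (vadd x y) = vadd (R x) (R y)" and zR: "R vzero = vzero"
    and cm: "\<And>x. L (R x) = R (L x)"
  shows "(L ^^ a) x = vzero \<Longrightarrow> (R ^^ b) x = vzero \<Longrightarrow> a + b \<le> n + 1 \<Longrightarrow>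
     ((\<lambda>x. vadd (L x) (R x)) ^^ n) x = vzero"
proof (induction n arbitrary: a b x)
  define T where "T = (\<lambda>x. vadd (L x) (R x))"
  have aT: "T (vadd x y) = vadd (T x) (T y)" for x y
    unfolding T_def aL aR by (simp add: vadd_def fun_eq_iff algebra_simps)
  have zT: "T vzero = vzero" unfolding T_def zL zR by (simp add: vadd_def vzero_def)
  case 0
  then have "x = vzero" by (cases a; cases b) auto
  then show ?case by simp
next
  define T where "T = (\<lambda>x. vadd (L x) (R x))"
  have aT: "T (vadd x y) = vadd (T x) (T y)" for x y
    unfolding T_def aL aR by (simp add: vadd_def fun_eq_iff algebra_simps)
  have zT: "T vzero = vzero" unfolding T_def zL zR by (simp add: vadd_def vzero_def)
  case (Suc n)
  show ?case
  proof (cases "a = 0 \<or> b = 0")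
    case True
    then have "x = vzero" using Suc.prems by auto
    then show ?thesis using funpow_add_gen[of T, OF aT zT] unfolding T_def by blast
  next
    case False
    then obtain a' b' where ab: "a = Suc a'" "b = Suc b'" by (cases a; cases b) auto
    have "(L ^^ a') (L x) = vzero" using Suc.prems(1) ab by (simp add: funpow_Suc_right del: funpow.simps)
    moreover have "(R ^^ b) (L x) = vzero" using Suc.prems(2) funpow_comm[of L R, OF cm] zL by simp
    ultimately have 1: "(T ^^ n) (L x) = vzero" using Suc.IH[of a' "L x" b] Suc.prems(3) ab unfolding T_def by simp
    have "(L ^^ a) (R x) = vzero" using Suc.prems(1) funpow_comm[of R L] cm zR by simp
    moreover have "(R ^^ b') (R x) = vzero" using Suc.prems(2) ab by (simp add: funpow_Suc_right del: funpow.simps)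
    ultimately have 2: "(T ^^ n) (R x) = vzero" using Suc.IH[of a "R x" b'] Suc.prems(3) ab unfolding T_def by simp
    have "(T ^^ Suc n) x = (T ^^ n) (vadd (L x) (R x))" by (simp add: funpow_Suc_right T_def del: funpow.simps)
    also have "\<dots> = vzero" using funpow_add_gen[of T, OF aT zT] 1 2 by (simp add: vadd_def vzero_def)
    finally show ?thesis unfolding T_def .
  qed
qed

lemma restr_nilp:
  assumes nla: "NLA m n c" and der: "is_der m c D" and nil: "nilp_map m (mapp m m D)"
  shows "nilp_map n (mapp n n D)"
proof -
  have nm: "n \<le> m" using nla by (simp add: NLA_def adapted_def)
  define restr where "restr = (\<lambda>y::cvec. \<lambda>k. if k < n then y k else (0::complex))"
  have key: "restr (mapp m m D y) = mapp n n D (restr y)" for y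
  proof (rule ext)
    fix k
    show "restr (mapp m m D y) k = mapp n n D (restr y) k"
    proof (cases "k < n")
      case False then show ?thesis by (simp add: restr_def mapp_def)
    next
      case True
      have "(\<Sum>i<m. D k i * y i) = (\<Sum>i<n. D k i * y i)"
        by (rule sum.mono_neutral_right) (use nm tri[OF nla der True] in auto)
      moreover have "(\<Sum>i<n. D k i * restr y i) = (\<Sum>i<n. D k i * y i)"
        by (rule sum.cong) (auto simp: restr_def)
      ultimately show ?thesis using True nm by (simp add: restr_def mapp_def)
    qed
  qed
  have iter: "restr ((mapp m m D ^^ j) y) = (mapp n n D ^^ j) (restr y)" for j y
    by (induction j) (simp_all add: key)
  obtain K where K: "\<forall>x\<in>vsp m. (mapp m m D ^^ K) x = vzero" using nil by (auto simp: nilp_map_def)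
  have "(mapp n n D ^^ K) z = vzero" if z: "z \<in> vsp n" for z
  proof -
    have "restr z = z" using z by (auto simp: restr_def vsp_def fun_eq_iff)
    moreover have "z \<in> vsp m" using z nm by (auto simp: vsp_def)
    ultimately show ?thesis using iter[of K z] K by (simp add: restr_def vzero_def)
  qed
  then show ?thesis by (auto simp: nilp_map_def)
qed

definition colv :: "nat \<Rightarrow> nat \<Rightarrow> nat \<Rightarrow> cvec \<Rightarrow> cvec" where
  "colv n1 n2 j x = (\<lambda>i. if i < n1 then x (i * n2 + j) else 0)"
definition rowv :: "nat \<Rightarrow> nat \<Rightarrow> nat \<Rightarrow> cvec \<Rightarrow> cvec" where
  "rowv n1 n2 i x = (\<lambda>j. if j < n2 then x (i * n2 + j) else 0)"

lemma colv_L: "j < n2 \<Longrightarrow> colv n1 n2 j (Lop n1 n2 A x) = mapp n1 n1 A (colv n1 n2 j x)"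
  by (auto simp: colv_def Lop_def mapp_def fun_eq_iff idx_bound intro!: sum.cong)

lemma rowv_R: "i < n1 \<Longrightarrow> rowv n1 n2 i (Rop n1 n2 B x) = mapp n2 n2 B (rowv n1 n2 i x)"
  by (auto simp: rowv_def Rop_def mapp_def fun_eq_iff idx_bound intro!: sum.cong)

lemma zero_cols: "y \<in> vsp (n1 * n2) \<Longrightarrow> (\<And>j. j < n2 \<Longrightarrow> colv n1 n2 j y = vzero) \<Longrightarrow> y = vzero"
proof (rule ext)
  fix k assume y: "y \<in> vsp (n1 * n2)" and c: "\<And>j. j < n2 \<Longrightarrow> colv n1 n2 j y = vzero"
  show "y k = vzero k"
  proof (cases "k < n1 * n2")
    case False then show ?thesis using y by (simp add: vsp_def vzero_def)
  next
    case True
    have n2: "n2 > 0" using True by (cases n2) auto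
    have kd: "k div n2 < n1" using True by (simp add: less_mult_imp_div_less)
    have "colv n1 n2 (k mod n2) y (k div n2) = y k" using kd by (simp add: colv_def)
    then show ?thesis using c[of "k mod n2"] n2 by (simp add: vzero_def)
  qed
qed

lemma zero_rows: "y \<in> vsp (n1 * n2) \<Longrightarrow> (\<And>i. i < n1 \<Longrightarrow> rowv n1 n2 i y = vzero) \<Longrightarrow> y = vzero"
proof (rule ext)
  fix k assume y: "y \<in> vsp (n1 * n2)" and c: "\<And>i. i < n1 \<Longrightarrow> rowv n1 n2 i y = vzero"
  show "y k = vzero k"
  proof (cases "k < n1 * n2")
    case False then show ?thesis using y by (simp add: vsp_def vzero_def)
  next
    case True
    have n2: "n2 > 0" using True by (cases n2) auto
    have kd: "k div n2 < n1" using True by (simp add: less_mult_imp_div_less)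
    have "rowv n1 n2 (k div n2) y (k mod n2) = y k" using n2 by (simp add: rowv_def)
    then show ?thesis using c[OF kd] by (simp add: vzero_def)
  qed
qed

lemma L_nilp:
  assumes "nilp_map n1 (mapp n1 n1 A)"
  shows "\<exists>a. \<forall>x\<in>vsp (n1 * n2). (Lop n1 n2 A ^^ a) x = vzero"
proof -
  obtain a where a: "\<forall>x\<in>vsp n1. (mapp n1 n1 A ^^ a) x = vzero" using assms by (auto simp: nilp_map_def)
  have it: "colv n1 n2 j ((Lop n1 n2 A ^^ t) x) = (mapp n1 n1 A ^^ t) (colv n1 n2 j x)" if "j < n2" for j t x
    by (induction t) (simp_all add: colv_L[OF that])
  have vs: "(Lop n1 n2 A ^^ t) x \<in> vsp (n1 * n2)" if "x \<in> vsp (n1 * n2)" for t x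
    using that by (cases t) (simp_all add: Lop_vsp)
  have "(Lop n1 n2 A ^^ a) x = vzero" if x: "x \<in> vsp (n1 * n2)" for x
  proof (rule zero_cols[OF vs[OF x]])
    fix j assume j: "j < n2"
    have "colv n1 n2 j x \<in> vsp n1" by (simp add: colv_def vsp_def)
    then show "colv n1 n2 j ((Lop n1 n2 A ^^ a) x) = vzero" using it[OF j] a by simp
  qed
  then show ?thesis by blast
qed

lemma R_nilp:
  assumes "nilp_map n2 (mapp n2 n2 B)"
  shows "\<exists>b. \<forall>x\<in>vsp (n1 * n2). (Rop n1 n2 B ^^ b) x = vzero"
proof -
  obtain b where b: "\<forall>x\<in>vsp n2. (mapp n2 n2 B ^^ b) x = vzero" using assms by (auto simp: nilp_map_def)
  have it: "rowv n1 n2 i ((Rop n1 n2 B ^^ t) x) = (mapp n2 n2 B ^^ t) (rowv n1 n2 i x)" if "i < n1" for i t x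
    by (induction t) (simp_all add: rowv_R[OF that])
  have vs: "(Rop n1 n2 B ^^ t) x \<in> vsp (n1 * n2)" if "x \<in> vsp (n1 * n2)" for t x
    using that by (cases t) (simp_all add: Rop_vsp)
  have "(Rop n1 n2 B ^^ b) x = vzero" if x: "x \<in> vsp (n1 * n2)" for x
  proof (rule zero_rows[OF vs[OF x]])
    fix i assume i: "i < n1"
    have "rowv n1 n2 i x \<in> vsp n2" by (simp add: rowv_def vsp_def)
    then show "rowv n1 n2 i ((Rop n1 n2 B ^^ b) x) = vzero" using it[OF i] b by simp
  qed
  then show ?thesis by blast
qed

theorem mainTheorem10:
  fixes m1 n1 m2 n2 :: nat and c1 c2 :: sconst and d :: cmat
  assumes "NLA m1 n1 c1" and "NLA m2 n2 c2"
    and "S_alg m1 n1 c1" and "S_alg m2 n2 c2"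
    and "is_der (pdim m1 n1 m2 n2) (prod_c m1 n1 c1 m2 n2 c2) d"
    and "is_der m1 c1 (blk d 0 0)" and "nilp_map m1 (mapp m1 m1 (blk d 0 0))"
    and "is_der m2 c2 (blk d m1 m1)" and "nilp_map m2 (mapp m2 m2 (blk d m1 m1))"
  shows "nilp_map (n1 * n2) (mapp (n1 * n2) (n1 * n2) (blk d (m1 + m2) (m1 + m2)))"
proof -
  have le1: "n1 \<le> m1" using assms(1) by (simp add: NLA_def adapted_def)
  have le2: "n2 \<le> m2" using assms(2) by (simp add: NLA_def adapted_def)
  define A where "A = blk d 0 0"
  define B where "B = blk d m1 m1"
  have E: "blk d (m1 + m2) (m1 + m2) k k' =
    (if k mod n2 = k' mod n2 then A (k div n2) (k' div n2) else 0) +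
    (if k div n2 = k' div n2 then B (k mod n2) (k' mod n2) else 0)"
    if "k < n1 * n2" "k' < n1 * n2" for k k'
    using entry[OF le1 le2 assms(5) that] by (simp add: blk_def A_def B_def)
  have T: "mapp (n1 * n2) (n1 * n2) (blk d (m1 + m2) (m1 + m2)) = (\<lambda>x. vadd (Lop n1 n2 A x) (Rop n1 n2 B x))"
    using T_eq[of n1 n2 "blk d (m1 + m2) (m1 + m2)" A B] E by blast
  have nA: "nilp_map n1 (mapp n1 n1 A)" unfolding A_def by (rule restr_nilp[OF assms(1,6,7)])
  have nB: "nilp_map n2 (mapp n2 n2 B)" unfolding B_def by (rule restr_nilp[OF assms(2,8,9)])
  obtain a where a: "\<forall>x\<in>vsp (n1 * n2). (Lop n1 n2 A ^^ a) x = vzero" using L_nilp[OF nA] by blast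
  obtain b where b: "\<forall>x\<in>vsp (n1 * n2). (Rop n1 n2 B ^^ b) x = vzero" using R_nilp[OF nB] by blast
  have "((\<lambda>x. vadd (Lop n1 n2 A x) (Rop n1 n2 B x)) ^^ (a + b)) x = vzero" if "x \<in> vsp (n1 * n2)" for x
    by (rule comm_nilp[of "Lop n1 n2 A" "Rop n1 n2 B" a x b])
       (use a b that in \<open>simp_all add: Lop_add Rop_add Lop_zero Rop_zero comm_LR\<close>)
  then show ?thesis unfolding T nilp_map_def by blast
qed

end
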